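(* For every integer $m\geq 3$, there exists a set of $m$ points in $\mathbb{R}^{m-1}$ that is in crescent configuration.
   Context: A set of points in $\mathbb{R}^d$ is in general position if no $d+1$ of the points lie on a common (affine) hyperplane of $\mathbb{R}^d$ and no $d+2$ of the points lie on a common hypersphere of $\mathbb{R}^d$. A set of $n$ points in $\mathbb{R}^d$ is in crescent configuration if the points are in general position in $\mathbb{R}^d$, the Euclidean distances between the $\binom{n}{2}$ pairs of distinct points take exactly $n-1$ distinct values, and for every $1\le i\le n-1$ there is one of these distance values that is attained by exactly $i$ pairs of points. *)

theory Defs
  imports "HOL-Analysis.Analysis"
begin

definition on_common_hyperplane :: "'a::euclidean_space set \<Rightarrow> bool" where
  "on_common_hyperplane S \<longleftrightarrow> (\<exists>a b. a \<noteq> 0 \<and> S \<subseteq> {x. a \<bullet> x = b})"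

definition on_common_hypersphere :: "'a::euclidean_space set \<Rightarrow> bool" where
  "on_common_hypersphere S \<longleftrightarrow> (\<exists>c r. r > 0 \<and> S \<subseteq> sphere c r)"

definition general_position :: "'a::euclidean_space set \<Rightarrow> bool" where
  "general_position P \<longleftrightarrow>
     (\<forall>S\<subseteq>P. card S = DIM('a) + 1 \<longrightarrow> \<not> on_common_hyperplane S) \<and>
     (\<forall>S\<subseteq>P. card S = DIM('a) + 2 \<longrightarrow> \<not> on_common_hypersphere S)"

definition distances :: "'a::euclidean_space set \<Rightarrow> real set" where
  "distances P = {dist p q | p q. p \<in> P \<and> q \<in> P \<and> p \<noteq> q}"

definition pairs_at_distance :: "'a::euclidean_space set \<Rightarrow> real \<Rightarrow> 'a set set" where
  "pairs_at_distance P t = {{p, q} | p q. p \<in> P \<and> q \<in> P \<and> p \<noteq> q \<and> dist p q = t}"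

definition crescent_configuration :: "'a::euclidean_space set \<Rightarrow> bool" where
  "crescent_configuration P \<longleftrightarrow>
     finite P \<and> general_position P \<and>
     card (distances P) = card P - 1 \<and>
     (\<forall>i. 1 \<le> i \<and> i \<le> card P - 1 \<longrightarrow>
        (\<exists>t\<in>distances P. card (pairs_at_distance P t) = i))"

end

theory Submission
  imports Defs
begin

definition qc :: "nat \<Rightarrow> nat \<Rightarrow> real" where
  "qc j k = (if k < j then 1 else if k = j then 1 + sqrt (real k) else 0)"

lemma sumL1:
  assumes "m < j" "i < j"
  shows "(\<Sum>k=1..m. (qc i k - qc j k)^2) = (if m < i then 0 else real m)"
  using assms
proof (induction m)
  case 0
  then show ?case by simp
next
  case (Suc m)
  have IH: "(\<Sum>k=1..m. (qc i k - qc j k)^2) = (if m < i then 0 else real m)"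
    using Suc by simp
  have s: "(\<Sum>k=1..Suc m. (qc i k - qc j k)^2) = (\<Sum>k=1..m. (qc i k - qc j k)^2) + (qc i (Suc m) - qc j (Suc m))^2"
    by simp
  show ?case
  proof (cases "Suc m < i")
    case True
    then show ?thesis using s IH Suc.prems by (simp add: qc_def)
  next
    case False
    show ?thesis
    proof (cases "Suc m = i")
      case True
      then show ?thesis using s IH Suc.prems by (simp add: qc_def)
    next
      case False
      then show ?thesis using s IH Suc.prems \<open>\<not> Suc m < i\<close> by (simp add: qc_def)
    qed
  qed
qed

lemma sum_full:
  assumes "i < j" "j \<le> n"
  shows "(\<Sum>k=1..n. (qc i k - qc j k)^2) = 2 * real j + 2 * sqrt (real j)"
  using assms
proof (induction n)
  case 0
  then show ?case by simp
next
  case (Suc n)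
  have s: "(\<Sum>k=1..Suc n. (qc i k - qc j k)^2) = (\<Sum>k=1..n. (qc i k - qc j k)^2) + (qc i (Suc n) - qc j (Suc n))^2"
    by simp
  show ?case
  proof (cases "j = Suc n")
    case True
    have L: "(\<Sum>k=1..n. (qc i k - qc j k)^2) = real n"
      using sumL1[of n j i] Suc.prems True by simp
    have t: "(qc i (Suc n) - qc j (Suc n))^2 = (1 + sqrt (real j))^2"
      using True Suc.prems by (simp add: qc_def power2_eq_square algebra_simps)
    have "(1 + sqrt (real j))^2 = 1 + 2 * sqrt (real j) + real j"
      by (simp add: power2_eq_square algebra_simps)
    then show ?thesis using s L t True by simp
  next
    case False
    then have "j \<le> n" using Suc.prems by simp
    then show ?thesis using s Suc.IH Suc.prems by (simp add: qc_def)
  qed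
qed

theorem mainTheorem2:
  assumes "CARD('n::finite) \<ge> 2"
  shows "\<exists>P :: (real ^ 'n) set. card P = CARD('n) + 1 \<and> crescent_configuration P"
proof -
  define d where "d = CARD('n)"
  have "card {1..d} = card (UNIV::'n set)" by (simp add: d_def)
  then obtain g where g: "bij_betw g {1..d} (UNIV::'n set)"
    using finite_same_card_bij[of "{1..d}" "UNIV::'n set"] by auto
  define f where "f = inv_into {1..d} g"
  have fg: "\<And>k. k \<in> {1..d} \<Longrightarrow> f (g k) = k"
    unfolding f_def using g bij_betw_inv_into_left by fast
  have gsurj: "\<And>i. \<exists>k\<in>{1..d}. i = g k" using g unfolding bij_betw_def by auto
  define p :: "nat \<Rightarrow> real^'n" where "p j = (\<chi> i. qc j (f i))" for j
  have sum_re: "\<And>F. (\<Sum>i\<in>UNIV. F i) = (\<Sum>k=1..d. F (g k))"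
    using sum.reindex_bij_betw[OF g] by metis
  have pc: "\<And>j k. k \<in> {1..d} \<Longrightarrow> p j $ g k = qc j k"
    by (simp add: p_def fg)
  define a where "a j = sqrt (2 * real j + 2 * sqrt (real j))" for j :: nat
  have dlt: "dist (p i) (p j) = a j" if "i < j" "j \<le> d" for i j
  proof -
    have "(dist (p i) (p j))^2 = (p i - p j) \<bullet> (p i - p j)"
      by (simp add: dist_norm power2_norm_eq_inner)
    also have "\<dots> = (\<Sum>x\<in>UNIV. (p i $ x - p j $ x) * (p i $ x - p j $ x))"
      by (simp add: inner_vec_def)
    also have "\<dots> = (\<Sum>k=1..d. (p i $ g k - p j $ g k) * (p i $ g k - p j $ g k))"
      by (rule sum_re)
    also have "\<dots> = (\<Sum>k=1..d. (qc i k - qc j k)^2)"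
      by (rule sum.cong) (auto simp: pc power2_eq_square)
    also have "\<dots> = 2 * real j + 2 * sqrt (real j)" using sum_full that by blast
    finally have "(dist (p i) (p j))^2 = 2 * real j + 2 * sqrt (real j)" .
    then show ?thesis unfolding a_def
      by (metis zero_le_dist real_sqrt_unique)
  qed
  have dgen: "dist (p i) (p j) = a (max i j)" if "i \<le> d" "j \<le> d" "i \<noteq> j" for i j
  proof (cases "i < j")
    case True then show ?thesis using that dlt by (simp add: max_def)
  next
    case False then have "j < i" using that by simp
    then show ?thesis using that dlt[of j i] by (simp add: max_def dist_commute)
  qed
  have amono: "strict_mono a"
  proof (rule strict_monoI)
    fix x y :: nat assume "x < y"
    then have "sqrt (real x) \<le> sqrt (real y)" by simp
    moreover have "real x < real y" using \<open>x < y\<close> by simp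
    ultimately have "2 * real x + 2 * sqrt (real x) < 2 * real y + 2 * sqrt (real y)" by linarith
    then show "a x < a y" unfolding a_def by simp
  qed
  have apos: "a j > 0" if "j \<ge> 1" for j
  proof -
    have "0 \<le> sqrt (real j)" by simp
    moreover have "real j > 0" using that by simp
    ultimately show ?thesis unfolding a_def by (simp add: add_pos_nonneg)
  qed
  have ainj: "inj a" using amono strict_mono_imp_inj_on by blast
  have pinj: "inj_on p {0..d}"
  proof (rule inj_onI)
    fix i j assume "i \<in> {0..d}" "j \<in> {0..d}" "p i = p j"
    show "i = j"
    proof (rule ccontr)
      assume "i \<noteq> j"
      then have "dist (p i) (p j) = a (max i j)" using dgen \<open>i \<in> {0..d}\<close> \<open>j \<in> {0..d}\<close> by auto
      moreover have "a (max i j) > 0" using \<open>i \<noteq> j\<close> by (intro apos) auto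
      ultimately show False using \<open>p i = p j\<close> by simp
    qed
  qed
  define P where "P = p ` {0..d}"
  have cardP: "card P = d + 1" unfolding P_def using card_image[OF pinj] by simp
  have finP: "finite P" unfolding P_def by simp
  have distP: "distances P = a ` {1..d}"
  proof
    show "distances P \<subseteq> a ` {1..d}"
    proof
      fix t assume "t \<in> distances P"
      then obtain i j where ij: "i \<le> d" "j \<le> d" "p i \<noteq> p j" "t = dist (p i) (p j)"
        unfolding distances_def P_def by auto
      then have "i \<noteq> j" by auto
      then have "t = a (max i j)" using dgen ij by auto
      moreover have "max i j \<in> {1..d}" using ij \<open>i \<noteq> j\<close> by auto
      ultimately show "t \<in> a ` {1..d}" by blast
    qed
  next
    show "a ` {1..d} \<subseteq> distances P"
    proof
      fix t assume "t \<in> a ` {1..d}"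
      then obtain j where j: "j \<in> {1..d}" "t = a j" by auto
      have "dist (p 0) (p j) = a j" using dlt j by auto
      moreover have "p 0 \<noteq> p j" using pinj j inj_on_eq_iff[OF pinj, of 0 j] by auto
      moreover have "p 0 \<in> p ` {0..d}" "p j \<in> p ` {0..d}" using j by auto
      ultimately show "t \<in> distances P" unfolding distances_def P_def mem_Collect_eq
        using j by (intro exI[of _ "p 0"] exI[of _ "p j"] conjI) auto
    qed
  qed
  have cardD: "card (distances P) = d"
    using distP card_image[OF inj_on_subset[OF ainj]] by simp
  have pairs: "pairs_at_distance P (a j) = (\<lambda>i. {p i, p j}) ` {0..<j}" if j: "j \<in> {1..d}" for j
  proof
    show "pairs_at_distance P (a j) \<subseteq> (\<lambda>i. {p i, p j}) ` {0..<j}"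
    proof
      fix s assume "s \<in> pairs_at_distance P (a j)"
      then obtain i k where ik: "i \<le> d" "k \<le> d" "p i \<noteq> p k" "dist (p i) (p k) = a j" "s = {p i, p k}"
        unfolding pairs_at_distance_def P_def by auto
      then have "i \<noteq> k" by auto
      then have "a (max i k) = a j" using dgen ik by auto
      then have "max i k = j" using ainj by (simp add: inj_eq)
      then show "s \<in> (\<lambda>i. {p i, p j}) ` {0..<j}"
        using ik \<open>i \<noteq> k\<close> by (cases "i < k") (auto simp: max_def insert_commute)
    qed
  next
    show "(\<lambda>i. {p i, p j}) ` {0..<j} \<subseteq> pairs_at_distance P (a j)"
    proof
      fix s assume "s \<in> (\<lambda>i. {p i, p j}) ` {0..<j}"
      then obtain i where i: "i < j" "s = {p i, p j}" by auto
      have "p i \<noteq> p j" using inj_on_eq_iff[OF pinj, of i j] i j by auto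
      moreover have "dist (p i) (p j) = a j" using dlt i j by auto
      ultimately show "s \<in> pairs_at_distance P (a j)"
        unfolding pairs_at_distance_def P_def mem_Collect_eq using i j
        by (intro exI[of _ "p i"] exI[of _ "p j"] conjI) auto
    qed
  qed
  have cardpairs: "card (pairs_at_distance P (a j)) = j" if j: "j \<in> {1..d}" for j
  proof -
    have "inj_on (\<lambda>i. {p i, p j}) {0..<j}"
    proof (rule inj_onI)
      fix x y assume xy: "x \<in> {0..<j}" "y \<in> {0..<j}" "{p x, p j} = {p y, p j}"
      have "p x \<noteq> p j" using inj_on_eq_iff[OF pinj, of x j] xy j by auto
      then have "p x = p y" using xy by (auto simp: doubleton_eq_iff)
      then show "x = y" using inj_on_eq_iff[OF pinj, of x y] xy j by auto
    qed
    then show ?thesis using pairs[OF j] card_image by fastforce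
  qed
  have gp: "general_position P"
    unfolding general_position_def
  proof (intro conjI allI impI)
    fix S assume S: "S \<subseteq> P" "card S = DIM(real^'n) + 2"
    then have "card S \<le> card P" using finP card_mono by blast
    then show "\<not> on_common_hypersphere S" using S cardP by (simp add: d_def)
  next
    fix S assume S: "S \<subseteq> P" "card S = DIM(real^'n) + 1"
    then have SP: "S = P" using finP cardP card_subset_eq by (metis d_def DIM_cart DIM_real mult_1_right)
    show "\<not> on_common_hyperplane S"
    proof
      assume "on_common_hyperplane S"
      then obtain c b where cb: "c \<noteq> 0" "\<And>j. j \<le> d \<Longrightarrow> c \<bullet> p j = b"
      proof -
        from \<open>on_common_hyperplane S\<close> obtain c b where "c \<noteq> 0" "S \<subseteq> {x. c \<bullet> x = b}"
          unfolding on_common_hyperplane_def by blast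
        moreover have "\<And>j. j \<le> d \<Longrightarrow> p j \<in> S" unfolding SP P_def by simp
        ultimately show ?thesis using that by blast
      qed
      have ip: "c \<bullet> p j = (\<Sum>k=1..d. c $ g k * qc j k)" for j
        by (simp add: inner_vec_def sum_re pc)
      have b0: "b = 0" using cb(2)[of 0] ip[of 0] by (simp add: qc_def)
      have "\<forall>k. 1 \<le> k \<and> k \<le> m \<longrightarrow> c $ g k = 0" if "m \<le> d" for m
        using that
      proof (induction m)
        case 0 then show ?case by simp
      next
        case (Suc m)
        have IH: "\<And>k. 1 \<le> k \<Longrightarrow> k \<le> m \<Longrightarrow> c $ g k = 0" using Suc by auto
        have "(\<Sum>k=1..d. c $ g k * qc (Suc m) k) = (\<Sum>k=1..d. if k = Suc m then c $ g (Suc m) * qc (Suc m) (Suc m) else 0)"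
          by (rule sum.cong) (auto simp: qc_def IH)
        also have "\<dots> = c $ g (Suc m) * qc (Suc m) (Suc m)" using Suc.prems by simp
        finally have "c $ g (Suc m) * qc (Suc m) (Suc m) = 0"
          using cb(2)[of "Suc m"] Suc.prems ip b0 by simp
        moreover have "qc (Suc m) (Suc m) > 0" unfolding qc_def
          by (simp add: add_pos_nonneg)
        ultimately have "c $ g (Suc m) = 0" by simp
        then show ?case using IH by (auto simp: le_Suc_eq)
      qed
      then have "\<forall>k\<in>{1..d}. c $ g k = 0" by auto
      then have "c = 0" using gsurj by (metis vec_eq_iff zero_index)
      then show False using cb(1) by simp
    qed
  qed
  have "crescent_configuration P"
    unfolding crescent_configuration_def
  proof (intro conjI allI impI)
    show "finite P" by (rule finP)
    show "general_position P" by (rule gp)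
    show "card (distances P) = card P - 1" using cardD cardP by simp
  next
    fix i assume i: "1 \<le> i \<and> i \<le> card P - 1"
    then have "i \<in> {1..d}" using cardP by simp
    then show "\<exists>t\<in>distances P. card (pairs_at_distance P t) = i"
      using cardpairs distP by blast
  qed
  then show ?thesis using cardP d_def by blast
qed

end
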